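(* Let $Q=(q_n)_{n\ge1}$ be a basic sequence that is infinite in limit, and let $F\in\Gamma_Q$. Then there exists a sequence $F_1,F_2,F_3,\dots$ of elements of $\Gamma_Q$ such that $F_n\ne F$ for all $n$ and $\lim_{n\to\infty}d(F,F_n)=0$.
   Context: A basic sequence is a sequence $Q=(q_n)_{n\ge1}$ of integers with $q_n\ge 2$; it is infinite in limit if $q_n\to\infty$. $\mathbb{N}$ denotes the positive integers. For each positive integer $j$ let $\nu_j=\min\{N : q_m\ge 2j^2 \text{ for all } m\ge N\}$. Define $l_1=\max(\nu_2-1,1)$ and, recursively for $i\ge 2$, $l_i=\max\big(\min\{k\in\mathbb{N} : l_1+2l_2+\cdots+(i-1)l_{i-1}+ik\ge \nu_{i+1}-1\},1\big)$. Put $L_i=\sum_{j=1}^i jl_j$ (with $L_0=0$). Let $S_Q=\{(a,b,c)\in\mathbb{N}^3 : b\le l_a,\ c\le a\}$ and $\phi_Q(a,b,c)=L_{a-1}+(b-1)a+c$; $\phi_Q$ is a bijection $S_Q\to\mathbb{N}$. A $Q$-special sequence is a family of integers $F=(F_{(a,b,c)})_{(a,b,c)\in S_Q}$ with $F_{(a,b,1)}=0$ for all $(a,b,1)\in S_Q$ and $\frac{F_{(a,b,c)}}{q_{\phi_Q(a,b,c)}}\in\left[\frac{c-1}{a}-\frac{1}{2a^2},\frac{c-1}{a}+\frac{1}{2a^2}\right]$ for $(a,b,c)\in S_Q$ with $c>1$. Let $\Gamma_Q$ be the set of $Q$-special sequences, and for $F\in\Gamma_Q$ put $E_{F,n}=F_{\phi_Q^{-1}(n)}$.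 For $F_1\ne F_2$ in $\Gamma_Q$ let $\zeta_{F_1,F_2}=\min\{n : E_{F_1,n}\ne E_{F_2,n}\}$ and define $d(F_1,F_2)=\frac{1}{q_1q_2\cdots q_{\zeta_{F_1,F_2}-1}}$ (empty product equal to $1$); set $d(F,F)=0$. *)

theory Defs
  imports Complex_Main
begin

text \<open>A sequence Q = (q_n)_{n>=1} is modelled as q :: nat => int; the value q 0 is irrelevant.\<close>

definition basic_seq :: "(nat \<Rightarrow> int) \<Rightarrow> bool" where
  "basic_seq q \<longleftrightarrow> (\<forall>n\<ge>1. q n \<ge> 2)"

definition infinite_in_limit :: "(nat \<Rightarrow> int) \<Rightarrow> bool" where
  "infinite_in_limit q \<longleftrightarrow> filterlim q at_top sequentially"

definition nu :: "(nat \<Rightarrow> int) \<Rightarrow> nat \<Rightarrow> nat" where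
  "nu q j = (LEAST N. N \<ge> 1 \<and> (\<forall>m\<ge>N. q m \<ge> 2 * int j ^ 2))"

definition l_step :: "(nat \<Rightarrow> int) \<Rightarrow> nat \<Rightarrow> nat \<Rightarrow> nat" where
  "l_step q i Lprev =
     (if i = 1 then max (nu q 2 - 1) 1
      else max (LEAST k. k \<ge> 1 \<and> Lprev + i * k \<ge> nu q (i + 1) - 1) 1)"

fun Lseq :: "(nat \<Rightarrow> int) \<Rightarrow> nat \<Rightarrow> nat" where
  "Lseq q 0 = 0"
| "Lseq q (Suc i) = Lseq q i + Suc i * l_step q (Suc i) (Lseq q i)"

definition lseq :: "(nat \<Rightarrow> int) \<Rightarrow> nat \<Rightarrow> nat" where
  "lseq q i = l_step q i (Lseq q (i - 1))"

definition S_Q :: "(nat \<Rightarrow> int) \<Rightarrow> (nat \<times> nat \<times> nat) set" where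
  "S_Q q = {(a, b, c). 1 \<le> a \<and> 1 \<le> b \<and> 1 \<le> c \<and> b \<le> lseq q a \<and> c \<le> a}"

definition phi_Q :: "(nat \<Rightarrow> int) \<Rightarrow> nat \<times> nat \<times> nat \<Rightarrow> nat" where
  "phi_Q q x = (case x of (a, b, c) \<Rightarrow> Lseq q (a - 1) + (b - 1) * a + c)"

text \<open>Q-special sequences: families indexed by S_Q, represented as functions that
  vanish outside S_Q (so that equality of families is equality of functions).\<close>
definition Gamma_Q :: "(nat \<Rightarrow> int) \<Rightarrow> (nat \<times> nat \<times> nat \<Rightarrow> int) set" where
  "Gamma_Q q = {F. (\<forall>x. x \<notin> S_Q q \<longrightarrow> F x = 0)
     \<and> (\<forall>(a, b, c) \<in> S_Q q. c = 1 \<longrightarrow> F (a, b, c) = 0)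
     \<and> (\<forall>(a, b, c) \<in> S_Q q. c > 1 \<longrightarrow>
          real_of_int (F (a, b, c)) / real_of_int (q (phi_Q q (a, b, c)))
            \<in> {(real c - 1) / real a - 1 / (2 * real a ^ 2) ..
               (real c - 1) / real a + 1 / (2 * real a ^ 2)})}"

definition E_seq :: "(nat \<Rightarrow> int) \<Rightarrow> (nat \<times> nat \<times> nat \<Rightarrow> int) \<Rightarrow> nat \<Rightarrow> int" where
  "E_seq q F n = F (THE x. x \<in> S_Q q \<and> phi_Q q x = n)"

definition zeta :: "(nat \<Rightarrow> int) \<Rightarrow> (nat \<times> nat \<times> nat \<Rightarrow> int) \<Rightarrow> (nat \<times> nat \<times> nat \<Rightarrow> int) \<Rightarrow> nat" where
  "zeta q F1 F2 = (LEAST n. n \<ge> 1 \<and> E_seq q F1 n \<noteq> E_seq q F2 n)"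

definition dQ :: "(nat \<Rightarrow> int) \<Rightarrow> (nat \<times> nat \<times> nat \<Rightarrow> int) \<Rightarrow> (nat \<times> nat \<times> nat \<Rightarrow> int) \<Rightarrow> real" where
  "dQ q F1 F2 = (if F1 = F2 then 0
     else 1 / (\<Prod>i\<in>{1..<zeta q F1 F2}. real_of_int (q i)))"

end

theory Submission
  imports Defs
begin

lemma l_step_ge1: "l_step q i L \<ge> 1"
  by (simp add: l_step_def)

lemma Lseq_Suc_ge: "Lseq q (Suc i) \<ge> Lseq q i + 1"
proof -
  have "l_step q (Suc i) (Lseq q i) \<le> Suc i * l_step q (Suc i) (Lseq q i)" by simp
  then have "Suc i * l_step q (Suc i) (Lseq q i) \<ge> 1"
    using l_step_ge1[of q "Suc i" "Lseq q i"] by linarith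
  then show ?thesis by simp
qed

lemma Lseq_strict: "strict_mono (Lseq q)"
  unfolding strict_mono_Suc_iff using Lseq_Suc_ge by (metis Suc_eq_plus1 Suc_le_eq)

lemma Lseq_ge: "Lseq q i \<ge> i"
proof (induction i)
  case 0 then show ?case by simp
next
  case (Suc i)
  then show ?case using Lseq_Suc_ge[of q i] by linarith
qed

lemma Lseq_unfold: "a \<ge> 1 \<Longrightarrow> Lseq q a = Lseq q (a - 1) + a * lseq q a"
  by (cases a) (auto simp: lseq_def)

lemma phi_bounds:
  assumes "(a,b,c) \<in> S_Q q"
  shows "Lseq q (a - 1) < phi_Q q (a,b,c) \<and> phi_Q q (a,b,c) \<le> Lseq q a"
proof -
  from assms have h: "1 \<le> a" "1 \<le> b" "1 \<le> c" "b \<le> lseq q a" "c \<le> a" by (auto simp: S_Q_def)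
  have "(b - 1) * a \<le> (lseq q a - 1) * a" using h by (intro mult_le_mono1) simp
  moreover have "(lseq q a - 1) * a + a = a * lseq q a"
    using h l_step_ge1[of q a] by (simp add: lseq_def algebra_simps)
  ultimately have "(b - 1) * a + c \<le> a * lseq q a" using h by linarith
  then show ?thesis using h Lseq_unfold[of a q] by (simp add: phi_Q_def)
qed

lemma divmod_uniq:
  fixes x y r s a :: nat
  assumes "x * a + r = y * a + s" "r < a" "s < a"
  shows "x = y \<and> r = s"
proof -
  have "x = (x * a + r) div a" using assms(2) by simp
  also have "\<dots> = (y * a + s) div a" using assms(1) by simp
  also have "\<dots> = y" using assms(3) by simp
  finally have "x = y" .
  then show ?thesis using assms(1) by auto
qed

lemma phi_inj: "inj_on (phi_Q q) (S_Q q)"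
proof (rule inj_onI)
  fix x y assume x: "x \<in> S_Q q" and y: "y \<in> S_Q q" and e: "phi_Q q x = phi_Q q y"
  obtain a b c where xd: "x = (a,b,c)" by (cases x) auto
  obtain a' b' c' where yd: "y = (a',b',c')" by (cases y) auto
  have bx: "Lseq q (a - 1) < phi_Q q x \<and> phi_Q q x \<le> Lseq q a" using phi_bounds[of a b c q] x xd by simp
  have by': "Lseq q (a' - 1) < phi_Q q y \<and> phi_Q q y \<le> Lseq q a'" using phi_bounds[of a' b' c' q] y yd by simp
  have ha: "1 \<le> a" "1 \<le> a'" using x y xd yd by (auto simp: S_Q_def)
  have "a = a'"
  proof (rule ccontr)
    assume "a \<noteq> a'"
    then show False
    proof (rule linorder_neqE_nat)
      assume "a < a'"
      then have "a \<le> a' - 1" by simp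
      then have "Lseq q a \<le> Lseq q (a' - 1)"
        by (rule strict_mono_less_eq[OF Lseq_strict, THEN iffD2])
      then show False using bx by' e by linarith
    next
      assume "a' < a"
      then have "a' \<le> a - 1" by simp
      then have "Lseq q a' \<le> Lseq q (a - 1)"
        by (rule strict_mono_less_eq[OF Lseq_strict, THEN iffD2])
      then show False using bx by' e by linarith
    qed
  qed
  have hx: "1 \<le> b" "1 \<le> c" "c \<le> a" using x xd by (auto simp: S_Q_def)
  have hy: "1 \<le> b'" "1 \<le> c'" "c' \<le> a" using y yd \<open>a = a'\<close> by (auto simp: S_Q_def)
  have e': "Lseq q (a - 1) + (b - 1) * a + c = Lseq q (a - 1) + (b' - 1) * a + c'"
    using e unfolding xd yd \<open>a = a'\<close> by (simp add: phi_Q_def)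
  then have "(b - 1) * a + c = (b' - 1) * a + c'" by linarith
  then have "(b - 1) * a + (c - 1) = (b' - 1) * a + (c' - 1)" using hx hy by arith
  moreover have "c - 1 < a" "c' - 1 < a" using hx hy by arith+
  ultimately have "b - 1 = b' - 1 \<and> c - 1 = c' - 1" by (rule divmod_uniq)
  then have "b = b'" "c = c'" using hx hy by arith+
  then show "x = y" using xd yd \<open>a = a'\<close> by simp
qed

lemma zeta_val:
  assumes x0: "x0 \<in> S_Q q" and t0: "x0 \<noteq> The (\<lambda>x. False)"
    and GF: "\<And>x. x \<noteq> x0 \<Longrightarrow> G x = F x" and neq: "G x0 \<noteq> F x0"
    and p1: "phi_Q q x0 \<ge> 1"
  shows "zeta q F G = phi_Q q x0"
proof -
  have the0: "(THE x. x \<in> S_Q q \<and> phi_Q q x = phi_Q q x0) = x0"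
    using x0 phi_inj[of q] by (intro the_equality) (auto dest: inj_onD)
  show ?thesis unfolding zeta_def
  proof (rule Least_equality)
    show "1 \<le> phi_Q q x0 \<and> E_seq q F (phi_Q q x0) \<noteq> E_seq q G (phi_Q q x0)"
      using p1 neq the0 by (auto simp: E_seq_def)
  next
    fix n assume n: "1 \<le> n \<and> E_seq q F n \<noteq> E_seq q G n"
    define t where "t = (THE x. x \<in> S_Q q \<and> phi_Q q x = n)"
    have "F t \<noteq> G t" using n by (simp add: E_seq_def t_def)
    then have tx: "t = x0" using GF by metis
    show "phi_Q q x0 \<le> n"
    proof (cases "\<exists>x. x \<in> S_Q q \<and> phi_Q q x = n")
      case True
      then have "\<exists>!x. x \<in> S_Q q \<and> phi_Q q x = n" using phi_inj[of q] by (auto dest: inj_onD)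
      then have "t \<in> S_Q q \<and> phi_Q q t = n" unfolding t_def by (rule theI')
      then show ?thesis using tx by simp
    next
      case False
      then have "(\<lambda>x. x \<in> S_Q q \<and> phi_Q q x = n) = (\<lambda>x. False)" by (intro ext) blast
      then have "t = The (\<lambda>x. False)" by (simp add: t_def)
      then show ?thesis using tx t0 by simp
    qed
  qed
qed

lemma nu_prop:
  assumes "infinite_in_limit q"
  shows "\<forall>m\<ge>nu q a. q m \<ge> 2 * int a ^ 2"
proof -
  have "eventually (\<lambda>m. 2 * int a ^ 2 \<le> q m) sequentially"
    using assms unfolding infinite_in_limit_def filterlim_at_top by blast
  then obtain N where N: "\<forall>m\<ge>N. 2 * int a ^ 2 \<le> q m" by (auto simp: eventually_sequentially)
  have ex: "\<exists>N. N \<ge> 1 \<and> (\<forall>m\<ge>N. q m \<ge> 2 * int a ^ 2)"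
    by (rule exI[of _ "max N 1"]) (use N in auto)
  show ?thesis using LeastI_ex[OF ex] unfolding nu_def by blast
qed

lemma L_nu: "Lseq q (Suc i) + 1 \<ge> nu q (i + 2)"
proof (cases i)
  case 0
  then show ?thesis by (simp add: l_step_def numeral_2_eq_2 max_def) arith
next
  case (Suc j)
  define P where "P = (\<lambda>k. k \<ge> 1 \<and> Lseq q i + Suc i * k \<ge> nu q (Suc i + 1) - 1)"
  have ex: "\<exists>k. P k"
  proof (rule exI[of _ "max (nu q (Suc i + 1)) 1"])
    have "max (nu q (Suc i + 1)) 1 \<le> Suc i * max (nu q (Suc i + 1)) 1" by simp
    then show "P (max (nu q (Suc i + 1)) 1)" unfolding P_def by linarith
  qed
  define K where "K = (LEAST k. P k)"
  have PK: "P K" unfolding K_def by (rule LeastI_ex[OF ex])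
  have ls: "l_step q (Suc i) (Lseq q i) = max K 1"
    using Suc by (simp add: l_step_def K_def P_def)
  have m: "Suc i * K \<le> Suc i * max K 1" by (intro mult_le_mono2) simp
  have e1: "nu q (Suc i + 1) - 1 \<le> Lseq q i + Suc i * K" using PK unfolding P_def by blast
  have e1': "nu q (Suc i + 1) \<le> Lseq q i + Suc i * K + 1" using e1 by (simp only: le_diff_conv)
  have e2: "Lseq q (Suc i) = Lseq q i + Suc i * max K 1" using ls by simp
  have "nu q (Suc i + 1) \<le> Lseq q (Suc i) + 1" using e1' e2 m by linarith
  then show ?thesis by (simp add: numeral_2_eq_2)
qed

lemma two_ints:
  fixes lo hi :: real and w :: int
  assumes "hi \<ge> lo + 2"
  shows "\<exists>v::int. lo \<le> v \<and> v \<le> hi \<and> v \<noteq> w"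
proof -
  define f where "f = \<lfloor>lo\<rfloor>"
  have a: "lo \<le> real_of_int (f + 1)" "real_of_int (f + 2) \<le> hi"
    using assms unfolding f_def by linarith+
  show ?thesis
  proof (cases "w = f + 1")
    case True
    then show ?thesis using a by (intro exI[of _ "f + 2"]) auto
  next
    case False
    then show ?thesis using a by (intro exI[of _ "f + 1"]) auto
  qed
qed

lemma one_step:
  fixes q :: "nat \<Rightarrow> int" and F :: "nat \<times> nat \<times> nat \<Rightarrow> int"
  assumes bq: "basic_seq q" and il: "infinite_in_limit q" and FG: "F \<in> Gamma_Q q"
    and a2: "a \<ge> 2" and aT: "(a, 1::nat, 2::nat) \<noteq> The (\<lambda>x. False)"
  shows "\<exists>G. G \<in> Gamma_Q q \<and> G \<noteq> F \<and> dQ q F G \<le> (1/2) ^ (a - 1)"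
proof -
  define x0 where "x0 = (a, 1::nat, 2::nat)"
  have x0S: "x0 \<in> S_Q q" using a2 l_step_ge1[of q a] by (simp add: x0_def S_Q_def lseq_def)
  have phix: "phi_Q q x0 = Lseq q (a - 1) + 2" by (simp add: x0_def phi_Q_def)
  obtain i where ai: "a = i + 2" using a2 by (metis add.commute le_Suc_ex)
  have "Lseq q (Suc i) + 1 \<ge> nu q (i + 2)" by (rule L_nu)
  then have "phi_Q q x0 \<ge> nu q a" using phix ai by simp
  then have Qge: "q (phi_Q q x0) \<ge> 2 * int a ^ 2" using nu_prop[OF il] by blast
  define Q where "Q = real_of_int (q (phi_Q q x0))"
  have Qge': "Q \<ge> 2 * real a ^ 2"
  proof -
    have "real_of_int (2 * int a ^ 2) \<le> Q" unfolding Q_def using Qge by linarith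
    then show ?thesis by simp
  qed
  have apos: "real a > 0" using a2 by simp
  have Qpos: "Q > 0" using Qge' apos by (smt (verit) zero_less_power)
  define lo where "lo = Q * (1 / real a - 1 / (2 * real a ^ 2))"
  define hi where "hi = Q * (1 / real a + 1 / (2 * real a ^ 2))"
  have "hi - lo = Q / real a ^ 2" unfolding hi_def lo_def by (simp add: field_simps)
  also have "\<dots> \<ge> 2" using Qge' apos by (simp add: field_simps)
  finally have "hi \<ge> lo + 2" by simp
  then obtain v :: int where v: "lo \<le> v" "v \<le> hi" "v \<noteq> F x0" using two_ints by blast
  define G where "G = F(x0 := v)"
  have vint: "real_of_int v / Q \<in> {(real 2 - 1) / real a - 1 / (2 * real a ^ 2) ..
               (real 2 - 1) / real a + 1 / (2 * real a ^ 2)}"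
  proof -
    have "1 / real a - 1 / (2 * real a ^ 2) \<le> real_of_int v / Q"
      using v(1) Qpos unfolding lo_def by (simp add: pos_le_divide_eq mult.commute)
    moreover have "real_of_int v / Q \<le> 1 / real a + 1 / (2 * real a ^ 2)"
      using v(2) Qpos unfolding hi_def by (simp add: pos_divide_le_eq mult.commute)
    ultimately show ?thesis by simp
  qed
  have GG: "G \<in> Gamma_Q q"
  proof -
    have F1: "\<forall>x. x \<notin> S_Q q \<longrightarrow> F x = 0"
      and F2: "\<forall>(a, b, c) \<in> S_Q q. c = 1 \<longrightarrow> F (a, b, c) = 0"
      and F3: "\<forall>(a, b, c) \<in> S_Q q. c > 1 \<longrightarrow>
          real_of_int (F (a, b, c)) / real_of_int (q (phi_Q q (a, b, c)))
            \<in> {(real c - 1) / real a - 1 / (2 * real a ^ 2) ..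
               (real c - 1) / real a + 1 / (2 * real a ^ 2)}"
      using FG unfolding Gamma_Q_def by blast+
    have G1: "\<forall>x. x \<notin> S_Q q \<longrightarrow> G x = 0" using F1 x0S by (auto simp: G_def)
    have G2: "\<forall>(a, b, c) \<in> S_Q q. c = 1 \<longrightarrow> G (a, b, c) = 0"
      using F2 by (auto simp: G_def x0_def)
    have G3: "\<forall>(a', b, c) \<in> S_Q q. c > 1 \<longrightarrow>
          real_of_int (G (a', b, c)) / real_of_int (q (phi_Q q (a', b, c)))
            \<in> {(real c - 1) / real a' - 1 / (2 * real a' ^ 2) ..
               (real c - 1) / real a' + 1 / (2 * real a' ^ 2)}"
    proof (intro ballI, clarify)
      fix a' b c assume m: "(a', b, c) \<in> S_Q q" "1 < c"
      show "real_of_int (G (a', b, c)) / real_of_int (q (phi_Q q (a', b, c)))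
            \<in> {(real c - 1) / real a' - 1 / (2 * real a' ^ 2) ..
               (real c - 1) / real a' + 1 / (2 * real a' ^ 2)}"
      proof (cases "(a', b, c) = x0")
        case True
        then have "a' = a" "c = 2" by (auto simp: x0_def)
        then show ?thesis using True vint by (simp add: G_def Q_def)
      next
        case False
        then show ?thesis using F3 m by (auto simp: G_def)
      qed
    qed
    show ?thesis unfolding Gamma_Q_def using G1 G2 G3 by blast
  qed
  have GF: "G \<noteq> F" using v(3) by (metis fun_upd_same G_def)
  have z: "zeta q F G = phi_Q q x0"
    by (rule zeta_val[OF x0S]) (use aT v(3) phix in \<open>auto simp: x0_def G_def\<close>)
  have dq: "dQ q F G = 1 / (\<Prod>i\<in>{1..<phi_Q q x0}. real_of_int (q i))"
    using GF z by (auto simp: dQ_def)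
  have "(\<Prod>i\<in>{1..<phi_Q q x0}. (2::real)) \<le> (\<Prod>i\<in>{1..<phi_Q q x0}. real_of_int (q i))"
  proof (rule prod_mono)
    fix i assume "i \<in> {1..<phi_Q q x0}"
    then have "q i \<ge> 2" using bq by (auto simp: basic_seq_def)
    then show "0 \<le> (2::real) \<and> 2 \<le> real_of_int (q i)" by simp
  qed
  then have pr: "2 ^ (phi_Q q x0 - 1) \<le> (\<Prod>i\<in>{1..<phi_Q q x0}. real_of_int (q i))" by simp
  have "a - 1 \<le> phi_Q q x0 - 1" using phix Lseq_ge[of "a - 1" q] by simp
  then have "(2::real) ^ (a - 1) \<le> 2 ^ (phi_Q q x0 - 1)" by (intro power_increasing) auto
  then have pr2: "(2::real) ^ (a - 1) \<le> (\<Prod>i\<in>{1..<phi_Q q x0}. real_of_int (q i))" using pr by linarith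
  moreover have "(0::real) < 2 ^ (a - 1)" by simp
  ultimately have pp: "0 < (\<Prod>i\<in>{1..<phi_Q q x0}. real_of_int (q i))" by linarith
  have "dQ q F G \<le> 1 / 2 ^ (a - 1)" unfolding dq
    using pr2 pp by (intro divide_left_mono) (auto intro!: mult_pos_pos)
  then have "dQ q F G \<le> (1/2) ^ (a - 1)" by (simp add: power_one_over)
  then show ?thesis using GG GF by blast
qed

theorem mainTheorem19:
  fixes q :: "nat \<Rightarrow> int" and F :: "nat \<times> nat \<times> nat \<Rightarrow> int"
  assumes "basic_seq q" and "infinite_in_limit q" and "F \<in> Gamma_Q q"
  shows "\<exists>Fs :: nat \<Rightarrow> (nat \<times> nat \<times> nat \<Rightarrow> int).
           (\<forall>n. Fs n \<in> Gamma_Q q \<and> Fs n \<noteq> F) \<and> (\<lambda>n. dQ q F (Fs n)) \<longlonglongrightarrow> 0"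
proof -
  have "\<forall>n. \<exists>G. G \<in> Gamma_Q q \<and> G \<noteq> F \<and> dQ q F G \<le> (1/2) ^ n"
  proof
    fix n
    define a :: nat where "a = (if (n + 2, 1::nat, 2::nat) = The (\<lambda>x. False) then n + 3 else n + 2)"
    have a2: "a \<ge> 2" and an: "n \<le> a - 1"
      unfolding a_def by auto
    have aT: "(a, 1::nat, 2::nat) \<noteq> The (\<lambda>x. False)"
    proof (cases "(n + 2, 1::nat, 2::nat) = The (\<lambda>x. False)")
      case True
      have "a = n + 3" unfolding a_def using True by (rule if_P)
      then have ne: "(a, 1::nat, 2::nat) \<noteq> (n + 2, 1, 2)" by simp
      show ?thesis using True ne by metis
    next
      case False
      then show ?thesis by (simp add: a_def)
    qed
    obtain G where G: "G \<in> Gamma_Q q" "G \<noteq> F" "dQ q F G \<le> (1/2) ^ (a - 1)"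
      using one_step[OF assms a2 aT] by blast
    have "(1/2::real) ^ (a - 1) \<le> (1/2) ^ n" using an by (intro power_decreasing) auto
    then have "dQ q F G \<le> (1/2) ^ n" using G(3) by linarith
    then show "\<exists>G. G \<in> Gamma_Q q \<and> G \<noteq> F \<and> dQ q F G \<le> (1/2) ^ n" using G(1,2) by blast
  qed
  then have "\<exists>Fs. \<forall>n. Fs n \<in> Gamma_Q q \<and> Fs n \<noteq> F \<and> dQ q F (Fs n) \<le> (1/2) ^ n"
    by (rule choice)
  then obtain Fs where Fs: "\<And>n. Fs n \<in> Gamma_Q q \<and> Fs n \<noteq> F \<and> dQ q F (Fs n) \<le> (1/2) ^ n"
    by blast
  have nonneg: "\<And>n. dQ q F (Fs n) \<ge> 0"
  proof -
    fix n
    have "\<And>i. i \<in> {1..<zeta q F (Fs n)} \<Longrightarrow> 0 \<le> real_of_int (q i)"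
    proof -
      fix i assume "i \<in> {1..<zeta q F (Fs n)}"
      then have "q i \<ge> 2" using assms(1) by (simp add: basic_seq_def)
      then show "0 \<le> real_of_int (q i)" by simp
    qed
    then show "dQ q F (Fs n) \<ge> 0" unfolding dQ_def by (auto intro!: prod_nonneg)
  qed
  have "(\<lambda>n. dQ q F (Fs n)) \<longlonglongrightarrow> 0"
  proof (rule tendsto_sandwich[of "\<lambda>n. 0" _ sequentially "\<lambda>n. (1/2::real) ^ n"])
    show "\<forall>\<^sub>F n in sequentially. 0 \<le> dQ q F (Fs n)" using nonneg by simp
    show "\<forall>\<^sub>F n in sequentially. dQ q F (Fs n) \<le> (1/2) ^ n" using Fs by simp
    show "(\<lambda>n. 0::real) \<longlonglongrightarrow> 0" by simp
    show "(\<lambda>n. (1/2::real) ^ n) \<longlonglongrightarrow> 0" by (rule LIMSEQ_power_zero) simp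
  qed
  then show ?thesis using Fs by blast
qed

end
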